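(* Let $\lambda$ be a nonzero real number, $x$ real, and $n\ge0$ an integer. Then $$\beta_{n,\lambda}(x)=\sum_{j=0}^{n}\frac{\lambda^{j}(1)_{j+1,\frac{1}{\lambda}}}{j+1}\sum_{k=j}^{n}\binom{n}{k}S_{2,\lambda}(k,j)\,(x)_{n-k,\lambda}.$$
   Context: For real $y$, $\mu\neq 0$ and integer $k\ge0$: $(y)_{0,\mu}=1$, $(y)_{k,\mu}=y(y-\mu)\cdots(y-(k-1)\mu)$ (used with $\mu=\lambda$ and $\mu=1/\lambda$); $(y)_0=1$, $(y)_k=y(y-1)\cdots(y-k+1)$. The degenerate exponential is $e_\lambda^x(t)=\sum_{k\ge0}(x)_{k,\lambda}t^k/k!=(1+\lambda t)^{x/\lambda}$, $e_\lambda(t)=e^1_\lambda(t)$. The degenerate Bernoulli polynomials are defined by $\frac{t}{e_\lambda(t)-1}e_\lambda^x(t)=\sum_{n\ge0}\beta_{n,\lambda}(x)\frac{t^n}{n!}$. The degenerate Stirling numbers of the second kind are defined by $(x)_{n,\lambda}=\sum_{k=0}^{n}S_{2,\lambda}(n,k)(x)_{k}$ ($n\ge0$). *)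

theory Defs
  imports "HOL-Computational_Algebra.Formal_Power_Series"
begin

definition gfact :: "real \<Rightarrow> nat \<Rightarrow> real \<Rightarrow> real" where
  "gfact y k mu = (\<Prod>i<k. y - real i * mu)"

definition ffact_r :: "real \<Rightarrow> nat \<Rightarrow> real" where
  "ffact_r y k = (\<Prod>i<k. y - real i)"

definition dexp :: "real \<Rightarrow> real \<Rightarrow> real fps" where
  "dexp lam x = Abs_fps (\<lambda>k. gfact x k lam / fact k)"

definition dbernoulli :: "real \<Rightarrow> nat \<Rightarrow> real \<Rightarrow> real" where
  "dbernoulli lam n x = fact n * fps_nth ((fps_X / (dexp lam 1 - 1)) * dexp lam x) n"

definition dstirling2 :: "real \<Rightarrow> nat \<Rightarrow> nat \<Rightarrow> real" where
  "dstirling2 lam n k =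
     (THE c. (\<forall>j>n. c j = 0) \<and> (\<forall>x. gfact x n lam = (\<Sum>j\<le>n. c j * ffact_r x j))) k"

end

theory Submission imports Defs begin
unbundle fps_syntax

lemma dexp_nth: "dexp lam y $ k = gfact y k lam / fact k"
  by (simp add: dexp_def)

lemma gfact_Suc: "gfact y (Suc k) lam = gfact y k lam * (y - real k * lam)"
  by (simp add: gfact_def)

lemma mulX_nth: fixes f :: "real fps" shows "((1 + fps_const lam * fps_X) * f) $ k = f $ k + (if k = 0 then 0 else lam * f $ (k - 1))"
proof -
  have "(1 + fps_const lam * fps_X) * f = f + fps_const lam * (fps_X * f)" by (subst distrib_right) (simp add: mult.assoc)
  then show ?thesis by simp
qed

lemma dexp_ode: "(1 + fps_const lam * fps_X) * fps_deriv (dexp lam y) = fps_const y * dexp lam y"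
proof (rule fps_ext)
  fix k
  show "((1 + fps_const lam * fps_X) * fps_deriv (dexp lam y)) $ k = (fps_const y * dexp lam y) $ k"
  proof (cases k)
    case 0 then show ?thesis by (simp add: mulX_nth dexp_nth gfact_def)
  next
    case (Suc m)
    have "(of_nat (k+1) * (gfact y (Suc k) lam / fact (Suc k))) = gfact y k lam * (y - real k * lam) / fact k"
      by (simp add: gfact_Suc del: of_nat_Suc) 
    moreover have "lam * (of_nat (k-1+1) * (gfact y (Suc (k-1)) lam / fact (Suc (k-1)))) = lam * real k * gfact y k lam / fact k"
      using Suc by (simp add: field_simps del: of_nat_Suc fact_Suc)
    ultimately show ?thesis using Suc apply (simp only: mulX_nth fps_deriv_nth dexp_nth fps_mult_left_const_nth)
      by (simp add: field_simps del: of_nat_Suc fact_Suc)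
  qed
qed

lemma dexp_unique:
  assumes h: "(1 + fps_const lam * fps_X) * fps_deriv f = fps_const y * f" and f0: "f $ 0 = 1"
  shows "f = dexp lam y"
proof -
  have rec: "f $ Suc k = (y - lam * real k) * f $ k / real (Suc k)" for k
  proof -
    have "((1 + fps_const lam * fps_X) * fps_deriv f) $ k = (fps_const y * f) $ k" using h by simp
    then have "real (Suc k) * f $ Suc k + lam * real k * f $ k = y * f $ k"
      by (cases k) (simp_all only: mulX_nth fps_deriv_nth fps_mult_left_const_nth, simp_all add: field_simps)
    then show ?thesis by (simp add: field_simps del: of_nat_Suc)
  qed
  have "f $ k = dexp lam y $ k" for k
  proof (induction k)
    case 0 then show ?case using f0 by (simp add: dexp_nth gfact_def)
  next
    case (Suc k)
    then have "f $ k = gfact y k lam / fact k" by (simp add: dexp_nth)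
    then have "f $ Suc k = (y - lam * real k) * (gfact y k lam / fact k) / real (Suc k)" by (simp add: rec)
    then show ?case by (simp add: dexp_nth gfact_Suc field_simps del: of_nat_Suc)
  qed
  then show ?thesis by (simp add: fps_eq_iff)
qed

lemma U0: "(dexp lam 1 - 1) $ 0 = 0"
  by (simp add: dexp_nth gfact_def)

lemma binom_ode: "(1 + fps_X) * fps_deriv (fps_binomial c) = fps_const (c::real) * fps_binomial c"
proof -
  have u: "is_unit (1 + fps_X :: real fps)" by (simp add: fps_is_unit_iff)
  show ?thesis unfolding fps_binomial_deriv
    by (metis u dvd_mult_div_cancel unit_imp_dvd dvd_mult2 dvd_div_mult mult.commute)
qed

lemma binom_comp: "fps_binomial y oo (dexp lam 1 - 1) = dexp lam y"
proof -
  define U where "U = dexp lam 1 - 1"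
  define E where "E = dexp lam 1"
  define B where "B = fps_binomial y"
  define L where "L = 1 + fps_const lam * fps_X"
  define g where "g = B oo U"
  have U0': "U $ 0 = 0" unfolding U_def by (rule U0)
  have gd: "fps_deriv g = (fps_deriv B oo U) * fps_deriv U"
    unfolding g_def by (rule fps_compose_deriv[OF U0'])
  have "((1 + fps_X) * fps_deriv B) oo U = (fps_const y * B) oo U"
    unfolding B_def by (simp add: binom_ode)
  then have c1: "E * (fps_deriv B oo U) = fps_const y * g"
    unfolding g_def fps_compose_mult_distrib[OF U0'] fps_compose_add_distrib
    using U0' by (simp add: U_def E_def)
  have c2: "L * fps_deriv U = E"
    using dexp_ode[of lam 1] by (simp add: U_def E_def L_def)
  have "E * (L * fps_deriv g) = (E * (fps_deriv B oo U)) * (L * fps_deriv U)"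
    unfolding gd by (simp add: algebra_simps)
  also have "\<dots> = E * (fps_const y * g)" unfolding c1 c2 by (simp add: algebra_simps)
  finally have "E * (L * fps_deriv g) = E * (fps_const y * g)" .
  moreover have "E \<noteq> 0"
  proof
    assume "E = 0" then have "E $ 0 = 0" by simp
    then show False by (simp add: E_def dexp_nth gfact_def)
  qed
  ultimately have "L * fps_deriv g = fps_const y * g" by simp
  moreover have "g $ 0 = 1" by (simp add: g_def B_def)
  ultimately have "g = dexp lam y" using dexp_unique L_def by blast
  then show ?thesis by (simp add: g_def B_def U_def)
qed

lemma ffact_gchoose: "ffact_r x k = (x gchoose k) * fact k"
  by (simp add: gbinomial_mult_fact' ffact_r_def atLeast0LessThan)

lemma ffact_same: "ffact_r (real m) m = fact m"
  by (simp add: ffact_gchoose binomial_gbinomial[symmetric])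

lemma ffact_big: "m < i \<Longrightarrow> ffact_r (real m) i = 0"
  unfolding ffact_r_def by (rule prod_zero) auto

lemma ffact_indep:
  assumes h: "\<forall>x. (\<Sum>j\<le>k. a j * ffact_r x j) = 0"
  shows "j \<le> k \<Longrightarrow> a j = 0"
proof (induction j rule: less_induct)
  case (less m)
  have "0 = (\<Sum>j\<le>k. a j * ffact_r (real m) j)" using h by simp
  also have "\<dots> = (\<Sum>j\<in>{m}. a j * ffact_r (real m) j)"
  proof (rule sum.mono_neutral_right)
    show "\<forall>i\<in>{..k} - {m}. a i * ffact_r (real m) i = 0"
    proof
      fix i assume i: "i \<in> {..k} - {m}"
      show "a i * ffact_r (real m) i = 0"
      proof (cases "i < m")
        case True then show ?thesis using less by simp
      next
        case False then show ?thesis using i ffact_big[of m i] by simp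
      qed
    qed
  qed (use less in auto)
  also have "\<dots> = a m * fact m" by (simp add: ffact_same)
  finally show ?case by simp
qed

definition sdef :: "real \<Rightarrow> nat \<Rightarrow> nat \<Rightarrow> real" where
  "sdef lam k j = fact k * ((dexp lam 1 - 1) ^ j $ k) / fact j"

lemma sdef_zero: "k < j \<Longrightarrow> sdef lam k j = 0"
  unfolding sdef_def using startsby_zero_power_prefix[OF U0[of lam]] by simp

lemma sdef_prop: "gfact x k lam = (\<Sum>j\<le>k. sdef lam k j * ffact_r x j)"
proof -
  have "dexp lam x $ k = (fps_binomial x oo (dexp lam 1 - 1)) $ k" by (simp add: binom_comp)
  then have "gfact x k lam / fact k = (\<Sum>j=0..k. (x gchoose j) * ((dexp lam 1 - 1) ^ j $ k))"
    by (simp add: dexp_nth fps_compose_nth)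
  then have "gfact x k lam = fact k * (\<Sum>j=0..k. (x gchoose j) * ((dexp lam 1 - 1) ^ j $ k))"
    by (simp add: field_simps)
  also have "\<dots> = (\<Sum>j\<le>k. sdef lam k j * ffact_r x j)"
    unfolding sum_distrib_left atLeast0AtMost
    by (rule sum.cong) (simp_all add: sdef_def ffact_gchoose)
  finally show ?thesis .
qed

lemma dstirling2_eq: "dstirling2 lam k j = sdef lam k j"
proof -
  let ?P = "\<lambda>c. (\<forall>j>k. c j = 0) \<and> (\<forall>x. gfact x k lam = (\<Sum>j\<le>k. c j * ffact_r x j))"
  have "(THE c. ?P c) = sdef lam k"
  proof (rule the_equality)
    show "?P (sdef lam k)" using sdef_zero sdef_prop by blast
  next
    fix c assume c: "?P c"
    have "\<forall>x. (\<Sum>j\<le>k. (c j - sdef lam k j) * ffact_r x j) = 0"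
      using c sdef_prop by (simp add: left_diff_distrib sum_subtractf)
    then have "j \<le> k \<Longrightarrow> c j - sdef lam k j = 0" for j by (rule ffact_indep)
    then show "c = sdef lam k" using c sdef_zero
      by (metis eq_iff_diff_eq_0 ext not_le)
  qed
  then show ?thesis unfolding dstirling2_def by simp
qed

lemma gfact_inv: assumes "lam \<noteq> 0"
  shows "lam ^ m * gfact 1 m (1 / lam) = (lam gchoose m) * fact m"
proof -
  have "lam ^ m * gfact 1 m (1 / lam) = (\<Prod>i<m. lam * (1 - real i * (1 / lam)))"
    by (simp add: gfact_def prod.distrib)
  also have "\<dots> = (\<Prod>i<m. lam - real i)"
    using assms by (intro prod.cong) (simp_all add: field_simps)
  also have "\<dots> = (lam gchoose m) * fact m"
    by (simp add: gbinomial_mult_fact' atLeast0LessThan)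
  finally show ?thesis .
qed

lemma dexp_self: "dexp lam lam = 1 + fps_const lam * fps_X"
proof (rule fps_ext)
  fix k
  show "dexp lam lam $ k = (1 + fps_const lam * fps_X) $ k"
  proof (cases "k \<ge> 2")
    case True
    have "gfact lam k lam = 0" unfolding gfact_def
      by (rule prod_zero) (use True in auto)
    then show ?thesis using True by (simp add: dexp_nth fps_X_def)
  next
    case False
    then have "k = 0 \<or> k = 1" by auto
    then show ?thesis by (auto simp: dexp_nth gfact_def fps_X_def)
  qed
qed

lemma const_comp: "c $ 0 = 0 \<Longrightarrow> (fps_const a * F) oo c = fps_const (a::real) * (F oo c)"
  by (simp add: fps_compose_mult_distrib)

lemma main_fps:
  assumes lam: "lam \<noteq> 0"
  shows "fps_X / (dexp lam 1 - 1) = Abs_fps (\<lambda>j. (lam gchoose (j+1)) / lam) oo (dexp lam 1 - 1)"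
proof -
  define U where "U = dexp lam 1 - 1"
  define C where "C = Abs_fps (\<lambda>j. (lam gchoose (j+1)) / lam)"
  have U0': "U $ 0 = 0" unfolding U_def by (rule U0)
  have XC: "fps_X * C = fps_const (1/lam) * (fps_binomial lam - 1)"
    by (rule fps_ext) (simp add: C_def)
  have "(fps_X * C) oo U = fps_X"
    unfolding XC const_comp[OF U0'] fps_compose_sub_distrib
    using lam by (simp add: U_def binom_comp dexp_self)
  then have UC: "U * (C oo U) = fps_X"
    unfolding fps_compose_mult_distrib[OF U0'] fps_X_fps_compose_startby0[OF U0'] .
  have "U \<noteq> 0"
  proof
    assume "U = 0" then show False using UC by simp
  qed
  then have "fps_X / U = C oo U" unfolding UC[symmetric] by simp
  then show ?thesis by (simp add: U_def C_def)
qed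

theorem theorem5:
  fixes lam x :: real and n :: nat
  assumes "lam \<noteq> 0"
  shows "dbernoulli lam n x =
    (\<Sum>j=0..n. (lam ^ j * gfact 1 (j + 1) (1 / lam)) / real (j + 1) *
       (\<Sum>k=j..n. real (n choose k) * dstirling2 lam k j * gfact x (n - k) lam))"
proof -
  define U where "U = dexp lam 1 - 1"
  define c where "c = (\<lambda>j. (lam gchoose (j+1)) / lam)"
  define T where "T = (\<lambda>j i. fact n * (c j * (U ^ j $ i) * (gfact x (n - i) lam / fact (n - i))))"
  have U0': "U $ 0 = 0" unfolding U_def by (rule U0)
  have Uz: "j > i \<Longrightarrow> U ^ j $ i = 0" for i j using startsby_zero_power_prefix[OF U0'] by simp
  have "dbernoulli lam n x = fact n * ((Abs_fps c oo U) * dexp lam x) $ n"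
    unfolding dbernoulli_def main_fps[OF assms] U_def c_def ..
  also have "\<dots> = (\<Sum>i=0..n. \<Sum>j=0..n. T j i)"
    unfolding fps_mult_nth sum_distrib_left
  proof (rule sum.cong[OF refl])
    fix i assume i: "i \<in> {0..n}"
    have "(\<Sum>j=0..i. c j * (U ^ j $ i)) = (\<Sum>j=0..n. c j * (U ^ j $ i))"
      by (rule sum.mono_neutral_left) (use i Uz in auto)
    then show "fact n * ((Abs_fps c oo U) $ i * dexp lam x $ (n - i)) = (\<Sum>j=0..n. T j i)"
      by (simp add: fps_compose_nth T_def dexp_nth sum_distrib_left sum_distrib_right sum_divide_distrib mult.assoc)
  qed
  also have "\<dots> = (\<Sum>j=0..n. \<Sum>i=0..n. T j i)" by (rule sum.swap)
  also have "\<dots> = (\<Sum>j=0..n. (lam ^ j * gfact 1 (j + 1) (1 / lam)) / real (j + 1) *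
       (\<Sum>k=j..n. real (n choose k) * dstirling2 lam k j * gfact x (n - k) lam))"
  proof (rule sum.cong[OF refl])
    fix j assume j: "j \<in> {0..n}"
    have cj: "(lam ^ j * gfact 1 (j + 1) (1 / lam)) / real (j + 1) = c j * fact j"
    proof -
      have "lam ^ (j+1) * gfact 1 (j + 1) (1 / lam) = (lam gchoose (j+1)) * fact (j+1)"
        by (rule gfact_inv[OF assms])
      then show ?thesis using assms unfolding c_def by (simp add: field_simps)
    qed
    have "(\<Sum>k=j..n. real (n choose k) * dstirling2 lam k j * gfact x (n - k) lam)
        = (\<Sum>k=0..n. real (n choose k) * dstirling2 lam k j * gfact x (n - k) lam)"
      by (rule sum.mono_neutral_left) (auto simp: dstirling2_eq sdef_zero)
    then have "(lam ^ j * gfact 1 (j + 1) (1 / lam)) / real (j + 1) *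
       (\<Sum>k=j..n. real (n choose k) * dstirling2 lam k j * gfact x (n - k) lam)
      = (\<Sum>k=0..n. c j * fact j * (real (n choose k) * dstirling2 lam k j * gfact x (n - k) lam))"
      by (simp only: cj sum_distrib_left)
    also have "\<dots> = (\<Sum>i=0..n. T j i)"
    proof (rule sum.cong[OF refl])
      fix k assume k: "k \<in> {0..n}"
      then have "real (n choose k) = fact n / (fact k * fact (n - k))"
        by (simp add: binomial_fact)
      then show "c j * fact j * (real (n choose k) * dstirling2 lam k j * gfact x (n - k) lam) = T j k"
        by (simp add: T_def dstirling2_eq sdef_def U_def field_simps)
    qed
    finally show "(\<Sum>i=0..n. T j i) = (lam ^ j * gfact 1 (j + 1) (1 / lam)) / real (j + 1) *
       (\<Sum>k=j..n. real (n choose k) * dstirling2 lam k j * gfact x (n - k) lam)" by simp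
  qed
  finally show ?thesis .
qed

end
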